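(* Let $a,b,c,d,e\in\mathbb C$ with $a\notin\mathbb Z$ and $e\notin\{0,-1,-2,\dots\}$. Then, as an identity of formal power series in $x,y$, $$H_2(a,b,c,d;e;x,y)=F(a,b;e;x)\,F(c,d;1-a;-y)+\sum_{k=1}^\infty\sum_{l=1}^k\frac{(-1)^{k+l}(k-1)!}{(l-1)!\,l!\,(k-l)!}\,\frac{(b)_k(c)_l(d)_l}{(1-a)_l(e)_k}\,x^ky^l\,F(a+k,b+k;e+k;x)\,F(c+l,d+l;1-a+l;-y).$$
   Context: Pochhammer symbol: $(\lambda)_k=\Gamma(\lambda+k)/\Gamma(\lambda)$ for every integer $k$ (possibly negative) whenever defined; in particular $(\lambda)_0=1$ and $(\lambda)_k=\lambda(\lambda+1)\cdots(\lambda+k-1)$ for $k\ge1$. Gauss function $F(a,b;c;x)=\sum_{k\ge0}\frac{(a)_k(b)_k}{(c)_k k!}x^k$. Horn's function $H_2(a,b,c,d;e;x,y)=\sum_{p,q\ge0}\frac{(a)_{p-q}(b)_p(c)_q(d)_q}{(e)_p\,p!\,q!}x^py^q$. All functions are regarded as formal power series in $x,y$; products of functions are products of power series; the infinite double sum converges in the formal (degree) topology since its $(k,l)$ term has total degree at least $k+l$. *)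

theory Defs
  imports Complex_Main "HOL-Computational_Algebra.Formal_Power_Series"
begin

text \<open>Bivariate formal power series in x,y are modelled as complex fps fps:
  the outer variable is x, the inner variable is y.\<close>

definition poch_int :: "complex \<Rightarrow> int \<Rightarrow> complex" where
  "poch_int a n = (if 0 \<le> n then pochhammer a (nat n)
     else 1 / pochhammer (a - of_nat (nat (- n))) (nat (- n)))"

definition gauss :: "complex \<Rightarrow> complex \<Rightarrow> complex \<Rightarrow> complex fps" where
  "gauss a b c = Abs_fps (\<lambda>k. pochhammer a k * pochhammer b k / (pochhammer c k * fact k))"

definition horn_H2 :: "complex \<Rightarrow> complex \<Rightarrow> complex \<Rightarrow> complex \<Rightarrow> complex \<Rightarrow> complex fps fps" where
  "horn_H2 a b c d e = Abs_fps (\<lambda>p. Abs_fps (\<lambda>q.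
     poch_int a (int p - int q) * pochhammer b p * pochhammer c q * pochhammer d q
       / (pochhammer e p * fact p * fact q)))"

definition inX :: "complex fps \<Rightarrow> complex fps fps" where
  "inX f = Abs_fps (\<lambda>p. fps_const (fps_nth f p))"

definition inY :: "complex fps \<Rightarrow> complex fps fps" where
  "inY f = fps_const f"

abbreviation X2 :: "complex fps fps" where "X2 \<equiv> fps_X"
abbreviation Y2 :: "complex fps fps" where "Y2 \<equiv> fps_const fps_X"

text \<open>Formal double sum: the limit in the degree topology of a family whose
  (k,l) term has total degree at least k+l; coefficient (p,q) collects
  the finitely many contributions with k+l \<le> p+q.\<close>
definition fps2_sum :: "(nat \<Rightarrow> nat \<Rightarrow> complex fps fps) \<Rightarrow> complex fps fps" where
  "fps2_sum T = Abs_fps (\<lambda>p. Abs_fps (\<lambda>q.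
     \<Sum>(k,l) \<in> {(k,l). k + l \<le> p + q}. fps_nth (fps_nth (T k l) p) q))"

end

theory Submission
  imports Defs
begin
unbundle fps_syntax

lemma inX_nth: "inX f $ p = fps_const (f $ p)" by (simp add: inX_def)

lemma prod_nth: "(inX F * inY G) $ p $ q = F $ p * G $ q"
  by (simp add: inX_def inY_def)

lemma compose_neg_nth: "fps_compose f (- fps_X :: complex fps) $ n = (-1)^n * f $ n"
  by (simp add: fps_compose_uminus')

lemma term_nth:
  "(fps_const (fps_const C) * X2^k * Y2^l * inX F * inY G) $ p $ q =
     (if k \<le> p \<and> l \<le> q then C * F $ (p-k) * G $ (q-l) else 0)"
proof -
  have "fps_const (fps_const C) * X2^k * Y2^l * inX F * inY G
      = fps_X^k * (inX F * fps_const (fps_const C * fps_X^l * G))"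
    by (simp add: inY_def fps_const_power[symmetric] fps_const_mult[symmetric] del: fps_const_power fps_const_mult)
  note eq = this
  show ?thesis unfolding eq
    by (simp add: fps_X_power_mult_nth inX_def mult.assoc)
qed

lemma lemA:
  fixes a :: complex
  shows "pochhammer (a - of_nat q) p = (\<Sum>k\<le>p. (-1)^k * of_nat (p choose k) * pochhammer (of_nat q) k * pochhammer (a + of_nat k) (p - k))"
proof (induction p arbitrary: a)
  case 0
  then show ?case by simp
next
  case (Suc p)
  have IH: "pochhammer (a + 1 - of_nat q) p = (\<Sum>k\<le>p. (-1)^k * of_nat (p choose k) * pochhammer (of_nat q) k * pochhammer (a + 1 + of_nat k) (p - k))"
    using Suc[of "a+1"] by simp
  have "pochhammer (a - of_nat q) (Suc p) = (a - of_nat q) * pochhammer (a + 1 - of_nat q) p"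
    using pochhammer_rec[of "a - of_nat q" p] by (simp add: add.commute add_diff_eq)
  also have "\<dots> = (\<Sum>k\<le>p. (-1)^k * of_nat (p choose k) * pochhammer (of_nat q) k * ((a + of_nat k) - (of_nat q + of_nat k)) * pochhammer (a + 1 + of_nat k) (p - k))"
    unfolding IH sum_distrib_left by (rule sum.cong[OF refl]) (simp add: algebra_simps)
  also have "\<dots> = (\<Sum>k\<le>p. (-1)^k * of_nat (p choose k) * pochhammer (of_nat q) k * pochhammer (a + of_nat k) (Suc p - k))
      - (\<Sum>k\<le>p. (-1)^k * of_nat (p choose k) * pochhammer (of_nat q) (Suc k) * pochhammer (a + of_nat (Suc k)) (Suc p - Suc k))"
    unfolding sum_subtractf[symmetric]
  proof (rule sum.cong[OF refl])
    fix k assume "k \<in> {..p}"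
    then have "Suc p - k = Suc (p - k)" by auto
    show "(-1)^k * of_nat (p choose k) * pochhammer (of_nat q) k * ((a + of_nat k) - (of_nat q + of_nat k)) * pochhammer (a + 1 + of_nat k) (p - k) =
      (-1)^k * of_nat (p choose k) * pochhammer (of_nat q) k * pochhammer (a + of_nat k) (Suc p - k) -
      (-1)^k * of_nat (p choose k) * pochhammer (of_nat q) (Suc k) * pochhammer (a + of_nat (Suc k)) (Suc p - Suc k)"
    proof -
      have h1: "pochhammer (of_nat q) (Suc k) = pochhammer (of_nat q) k * (of_nat q + of_nat k :: complex)"
        by (simp add: pochhammer_Suc)
      have h2: "pochhammer (a + of_nat k) (Suc (p-k)) = (a + of_nat k) * pochhammer (a + 1 + of_nat k) (p-k)"
        by (simp add: pochhammer_rec add_ac)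
      have h3: "a + of_nat (Suc k) = a + 1 + of_nat k" by simp
      show ?thesis unfolding \<open>Suc p - k = Suc (p - k)\<close> h1 h2 h3 Suc_diff_Suc diff_Suc_Suc
        by (simp add: algebra_simps)
    qed
  qed
  also have "\<dots> = (\<Sum>k\<le>Suc p. (-1)^k * of_nat (Suc p choose k) * pochhammer (of_nat q) k * pochhammer (a + of_nat k) (Suc p - k))"
  proof -
    have s1: "(\<Sum>k\<le>Suc p. (-1)^k * of_nat (Suc p choose k) * pochhammer (of_nat q) k * pochhammer (a + of_nat k) (Suc p - k))
       = (\<Sum>k\<le>Suc p. (-1)^k * of_nat (p choose k) * pochhammer (of_nat q) k * pochhammer (a + of_nat k) (Suc p - k))
       + (\<Sum>k\<le>Suc p. (-1)^k * of_nat (if k = 0 then 0 else p choose (k - 1)) * pochhammer (of_nat q) k * pochhammer (a + of_nat k) (Suc p - k))"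
      unfolding sum.distrib[symmetric]
    proof (rule sum.cong[OF refl])
      fix k show "(-1)^k * of_nat (Suc p choose k) * pochhammer (of_nat q) k * pochhammer (a + of_nat k) (Suc p - k) =
        (-1)^k * of_nat (p choose k) * pochhammer (of_nat q) k * pochhammer (a + of_nat k) (Suc p - k) +
        (-1)^k * of_nat (if k = 0 then 0 else p choose (k - 1)) * pochhammer (of_nat q) k * pochhammer (a + of_nat k) (Suc p - k)"
        by (cases k) (simp_all add: algebra_simps)
    qed
    have s2: "(\<Sum>k\<le>Suc p. (-1)^k * of_nat (p choose k) * pochhammer (of_nat q) k * pochhammer (a + of_nat k) (Suc p - k))
       = (\<Sum>k\<le>p. (-1)^k * of_nat (p choose k) * pochhammer (of_nat q) k * pochhammer (a + of_nat k) (Suc p - k))"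
      by (simp add: sum.atMost_Suc)
    have s3: "(\<Sum>k\<le>Suc p. (-1)^k * of_nat (if k = 0 then 0 else p choose (k - 1)) * pochhammer (of_nat q) k * pochhammer (a + of_nat k) (Suc p - k))
       = - (\<Sum>k\<le>p. (-1)^k * of_nat (p choose k) * pochhammer (of_nat q) (Suc k) * pochhammer (a + of_nat (Suc k)) (Suc p - Suc k))"
      unfolding sum.atMost_Suc_shift by (simp add: sum_negf[symmetric] del: sum.atMost_Suc)
    show ?thesis unfolding s1 s2 s3 by (simp del: sum.atMost_Suc)
  qed
  finally show ?case .
qed
lemma poch_nat: assumes "1 \<le> k"
  shows "pochhammer (of_nat q :: complex) k = fact k * of_nat ((q + k - 1) choose k)"
proof -
  have "of_nat ((q + k - 1) choose k) = (of_nat (q + k - 1) :: complex) gchoose k"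
    by (simp add: binomial_gbinomial)
  also have "\<dots> = pochhammer (of_nat (q + k - 1) - of_nat k + 1) k / fact k"
    by (rule gbinomial_pochhammer')
  also have "of_nat (q + k - 1) - of_nat k + 1 = (of_nat q :: complex)"
    using assms by (simp add: of_nat_diff)
  finally show ?thesis by simp
qed

lemma Dsum: assumes "1 \<le> k"
  shows "(\<Sum>l\<le>q. if 1 \<le> l \<and> l \<le> k then (k - 1 choose (l - 1)) * (q choose l) else 0) = (q + k - 1) choose k"
proof -
  define h where "h l = (if l \<le> k then (q choose l) * (k - 1 choose (k - l)) else 0)" for l
  have g: "(if 1 \<le> l \<and> l \<le> k then (k - 1 choose (l - 1)) * (q choose l) else 0) = h l" for l
  proof (cases "l = 0")
    case True then show ?thesis using assms by (simp add: h_def)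
  next
    case False
    show ?thesis
    proof (cases "l \<le> k")
      case True
      then have "k - 1 choose (k - l) = k - 1 choose (l - 1)"
        using False binomial_symmetric[of "l - 1" "k - 1"] by simp
      then show ?thesis using True False by (simp add: h_def)
    qed (simp add: h_def)
  qed
  have "(\<Sum>l\<le>q. h l) = (\<Sum>l\<le>q+k. h l)"
    by (rule sum.mono_neutral_left) (auto simp: h_def)
  also have "\<dots> = (\<Sum>l\<le>k. h l)"
    by (rule sum.mono_neutral_right) (auto simp: h_def)
  also have "\<dots> = (\<Sum>l\<le>k. (q choose l) * (k - 1 choose (k - l)))"
    by (simp add: h_def)
  also have "\<dots> = (q + (k - 1)) choose k" by (rule vandermonde)
  finally show ?thesis unfolding g using assms by simp
qed
lemma lemC:
  fixes a :: complex
  shows "pochhammer (a - of_nat q) p = pochhammer a p + (\<Sum>k\<le>p. \<Sum>l\<le>q.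
     if 1 \<le> l \<and> l \<le> k then (-1)^k * of_nat (k - 1 choose (l - 1)) * of_nat (q choose l) * fact p / fact (p - k) * pochhammer (a + of_nat k) (p - k) else 0)"
proof -
  have t: "(-1)^k * of_nat (p choose k) * pochhammer (of_nat q) k * pochhammer (a + of_nat k) (p - k)
     = (if k = 0 then pochhammer a p else 0) + (\<Sum>l\<le>q.
     if 1 \<le> l \<and> l \<le> k then (-1)^k * of_nat (k - 1 choose (l - 1)) * of_nat (q choose l) * fact p / fact (p - k) * pochhammer (a + of_nat k) (p - k) else 0)"
    if "k \<le> p" for k
  proof (cases "k = 0")
    case True then show ?thesis by (simp add: sum.neutral)
  next
    case False
    then have k1: "1 \<le> k" by simp
    have "(\<Sum>l\<le>q.
     if 1 \<le> l \<and> l \<le> k then (-1)^k * of_nat (k - 1 choose (l - 1)) * of_nat (q choose l) * fact p / fact (p - k) * pochhammer (a + of_nat k) (p - k) else 0)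
      = ((-1)^k * fact p / fact (p - k) * pochhammer (a + of_nat k) (p - k)) *
        of_nat (\<Sum>l\<le>q. if 1 \<le> l \<and> l \<le> k then (k - 1 choose (l - 1)) * (q choose l) else 0)"
      unfolding of_nat_sum sum_distrib_left
      by (rule sum.cong[OF refl]) simp
    also have "\<dots> = ((-1)^k * fact p / fact (p - k) * pochhammer (a + of_nat k) (p - k)) * of_nat ((q + k - 1) choose k)"
      using Dsum[OF k1] by simp
    also have "\<dots> = (-1)^k * of_nat (p choose k) * pochhammer (of_nat q) k * pochhammer (a + of_nat k) (p - k)"
      using that by (simp add: poch_nat[OF k1] binomial_fact field_simps)
    finally show ?thesis using False by simp
  qed
  have "pochhammer (a - of_nat q) p = (\<Sum>k\<le>p. (if k = 0 then pochhammer a p else 0) + (\<Sum>l\<le>q.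
     if 1 \<le> l \<and> l \<le> k then (-1)^k * of_nat (k - 1 choose (l - 1)) * of_nat (q choose l) * fact p / fact (p - k) * pochhammer (a + of_nat k) (p - k) else 0))"
    unfolding lemA by (rule sum.cong[OF refl]) (simp add: t)
  then show ?thesis by (simp add: sum.distrib)
qed
lemma nz_e: assumes "\<forall>n::nat. e \<noteq> - of_nat n"
  shows "pochhammer (e + of_nat k) n \<noteq> (0::complex)"
proof
  assume "pochhammer (e + of_nat k) n = 0"
  then obtain j where "e + of_nat k = - of_nat j" by (auto simp: pochhammer_eq_0_iff)
  then have "e = - of_nat (j + k)" by (simp add: algebra_simps)
  with assms show False by blast
qed

lemma nz_a: assumes "(a::complex) \<notin> \<int>"
  shows "pochhammer (1 - a + of_nat l) n \<noteq> 0"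
proof
  assume "pochhammer (1 - a + of_nat l) n = 0"
  then obtain j where "1 - a + of_nat l = - of_nat j" by (auto simp: pochhammer_eq_0_iff)
  then have "a = of_int (1 + int l + int j)" by (simp add: algebra_simps)
  with assms show False by (metis Ints_of_int)
qed

lemma nz_a': assumes "(a::complex) \<notin> \<int>"
  shows "pochhammer (a - of_nat l) n \<noteq> 0"
proof
  assume "pochhammer (a - of_nat l) n = 0"
  then obtain j where "a - of_nat l = - of_nat j" by (auto simp: pochhammer_eq_0_iff)
  then have "a = of_int (int l - int j)" by (simp add: algebra_simps)
  with assms show False by (metis Ints_of_int)
qed

lemma one_minus_poch: "pochhammer (1 - a) q = (-1)^q * pochhammer (a - of_nat q) (q::nat)" for a :: complex
  using pochhammer_minus[of "a - 1" q] by (simp add: algebra_simps)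

lemma PI: assumes "(a::complex) \<notin> \<int>"
  shows "poch_int a (int p - int q) * pochhammer (1 - a) q = (-1)^q * pochhammer (a - of_nat q) p"
proof (cases "q \<le> p")
  case True
  then have "nat (int p - int q) = p - q" by simp
  moreover have "pochhammer (a - of_nat q) p = pochhammer (a - of_nat q) q * pochhammer a (p - q)"
    using pochhammer_product[OF True, of "a - of_nat q"] by simp
  ultimately show ?thesis using True by (simp add: poch_int_def one_minus_poch)
next
  case False
  then have n: "nat (- (int p - int q)) = q - p" and "\<not> 0 \<le> int p - int q" by auto
  have "pochhammer (a - of_nat q) q = pochhammer (a - of_nat q) p * pochhammer (a - of_nat (q - p)) (q - p)"
    using pochhammer_product[of p q "a - of_nat q"] False by (simp add: of_nat_diff algebra_simps)
  moreover have "pochhammer (a - of_nat (q - p)) (q - p) \<noteq> 0" using nz_a'[OF assms] .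
  ultimately show ?thesis using False unfolding poch_int_def n
    by (simp add: one_minus_poch)
qed
lemma term_eq:
  fixes a b c d e :: complex
  assumes A: "a \<notin> \<int>" and E: "\<forall>n::nat. e \<noteq> - of_nat n"
    and kl: "1 \<le> l" "l \<le> k" "k \<le> p" "l \<le> q"
  shows "((-1) ^ (k + l) * fact (k - 1) / (fact (l - 1) * fact l * fact (k - l))
          * (pochhammer b k * pochhammer c l * pochhammer d l)
          / (pochhammer (1 - a) l * pochhammer e k))
     * (pochhammer (a + of_nat k) (p - k) * pochhammer (b + of_nat k) (p - k) / (pochhammer (e + of_nat k) (p - k) * fact (p - k)))
     * ((-1)^(q - l) * (pochhammer (c + of_nat l) (q - l) * pochhammer (d + of_nat l) (q - l) / (pochhammer (1 - a + of_nat l) (q - l) * fact (q - l))))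
   = (pochhammer b p * pochhammer c q * pochhammer d q / (pochhammer e p * pochhammer (1 - a) q * fact p * fact q)) * (-1)^q *
     ((-1)^k * of_nat (k - 1 choose (l - 1)) * of_nat (q choose l) * fact p / fact (p - k) * pochhammer (a + of_nat k) (p - k))"
proof -
  have pb: "pochhammer b p = pochhammer b k * pochhammer (b + of_nat k) (p - k)"
    using pochhammer_product[OF kl(3)] .
  have pe: "pochhammer e p = pochhammer e k * pochhammer (e + of_nat k) (p - k)"
    using pochhammer_product[OF kl(3)] .
  have pc: "pochhammer c q = pochhammer c l * pochhammer (c + of_nat l) (q - l)"
    using pochhammer_product[OF kl(4)] .
  have pd: "pochhammer d q = pochhammer d l * pochhammer (d + of_nat l) (q - l)"
    using pochhammer_product[OF kl(4)] .
  have pa: "pochhammer (1 - a) q = pochhammer (1 - a) l * pochhammer (1 - a + of_nat l) (q - l)"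
    using pochhammer_product[OF kl(4)] .
  have c1: "(of_nat (k - 1 choose (l - 1)) :: complex) = fact (k - 1) / (fact (l - 1) * fact (k - l))"
    using binomial_fact[where 'a=complex, of "l - 1" "k - 1"] kl by (simp add: Suc_diff_Suc)
  have c2: "(of_nat (q choose l) :: complex) = fact q / (fact l * fact (q - l))"
    using binomial_fact[of l q] kl by simp
  have s1: "(-1::complex) ^ (k + l) = (-1)^k * (-1)^l" by (simp add: power_add)
  have s2: "(-1::complex) ^ q = (-1)^l * (-1)^(q - l)"
    using kl by (simp add: power_add[symmetric])
  have n1: "pochhammer (1 - a) l \<noteq> 0" using nz_a[OF A, of 0] by simp
  have n2: "pochhammer (1 - a + of_nat l) (q - l) \<noteq> 0" using nz_a[OF A] .
  have n3: "pochhammer e k \<noteq> 0" using nz_e[OF E, of 0] by simp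
  have n4: "pochhammer (e + of_nat k) (p - k) \<noteq> 0" using nz_e[OF E] .
  show ?thesis unfolding pb pe pc pd pa c1 c2 s1 s2
    using n1 n2 n3 n4 by (simp add: field_simps)
qed
theorem mainTheorem2:
  fixes a b c d e :: complex
  assumes "a \<notin> \<int>" and "\<forall>n::nat. e \<noteq> - of_nat n"
  shows "horn_H2 a b c d e =
    inX (gauss a b e) * inY (fps_compose (gauss c d (1 - a)) (- fps_X))
    + fps2_sum (\<lambda>k l. if 1 \<le> l \<and> l \<le> k then
        fps_const (fps_const (
          (-1) ^ (k + l) * fact (k - 1) / (fact (l - 1) * fact l * fact (k - l))
          * (pochhammer b k * pochhammer c l * pochhammer d l)
          / (pochhammer (1 - a) l * pochhammer e k)))
        * X2 ^ k * Y2 ^ l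
        * inX (gauss (a + of_nat k) (b + of_nat k) (e + of_nat k))
        * inY (fps_compose (gauss (c + of_nat l) (d + of_nat l) (1 - a + of_nat l)) (- fps_X))
      else 0)"
  (is "_ = ?M + fps2_sum ?T")
proof (rule fps_ext, rule fps_ext)
  fix p q
  define T where "T k l = (if 1 \<le> l \<and> l \<le> k then
        fps_const (fps_const (
          (-1) ^ (k + l) * fact (k - 1) / (fact (l - 1) * fact l * fact (k - l))
          * (pochhammer b k * pochhammer c l * pochhammer d l)
          / (pochhammer (1 - a) l * pochhammer e k)))
        * X2 ^ k * Y2 ^ l
        * inX (gauss (a + of_nat k) (b + of_nat k) (e + of_nat k))
        * inY (fps_compose (gauss (c + of_nat l) (d + of_nat l) (1 - a + of_nat l)) (- fps_X))
      else 0)" for k l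
  have TT: "?T = T" by (intro ext) (simp only: T_def)
  define Cm where "Cm = pochhammer b p * pochhammer c q * pochhammer d q / (pochhammer e p * pochhammer (1 - a) q * fact p * fact q)"
  define u where "u k l = (if 1 \<le> l \<and> l \<le> k then (-1)^k * of_nat (k - 1 choose (l - 1)) * of_nat (q choose l) * fact p / fact (p - k) * pochhammer (a + of_nat k) (p - k) else (0::complex))" for k l
  have n1: "pochhammer (1 - a) q \<noteq> 0" using nz_a[OF assms(1), of 0] by simp
  have n3: "pochhammer e p \<noteq> 0" using nz_e[OF assms(2), of 0] by simp
  have H: "horn_H2 a b c d e $ p $ q = Cm * (-1)^q * pochhammer (a - of_nat q) p"
  proof -
    have "horn_H2 a b c d e $ p $ q = poch_int a (int p - int q) * pochhammer b p * pochhammer c q * pochhammer d q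
       / (pochhammer e p * fact p * fact q)" by (simp add: horn_H2_def)
    also have "poch_int a (int p - int q) = (-1)^q * pochhammer (a - of_nat q) p / pochhammer (1 - a) q"
      using PI[OF assms(1), of p q] n1 by (simp add: field_simps)
    finally show ?thesis using n1 n3 by (simp add: Cm_def field_simps)
  qed
  have M: "?M $ p $ q = Cm * (-1)^q * pochhammer a p"
    using n1 n3 by (simp add: prod_nth compose_neg_nth gauss_def Cm_def field_simps)
  have Tt: "T k l $ p $ q = (if k \<le> p \<and> l \<le> q then Cm * (-1)^q * u k l else 0)" for k l
  proof (cases "1 \<le> l \<and> l \<le> k \<and> k \<le> p \<and> l \<le> q")
    case True
    have c: "1 \<le> l \<and> l \<le> k" using True by simp
    show ?thesis
      unfolding T_def
      apply (subst if_P[OF c])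
      apply (subst term_nth)
      using term_eq[OF assms, of l k p q b c d] True
      by (simp add: u_def Cm_def compose_neg_nth gauss_def)
  next
    case False
    show ?thesis
    proof (cases "1 \<le> l \<and> l \<le> k")
      case c: True
      show ?thesis
        unfolding T_def
      apply (subst if_P[OF c])
        apply (subst term_nth)
        using False c by (auto simp: u_def)
    qed (use False in \<open>auto simp: u_def T_def\<close>)
  qed
  have S: "fps2_sum T $ p $ q = (\<Sum>k\<le>p. \<Sum>l\<le>q. Cm * (-1)^q * u k l)"
  proof -
    let ?S = "{(k,l). k + l \<le> p + q}"
    have fin: "finite ?S"
      by (rule finite_subset[of _ "{..p+q} \<times> {..p+q}"]) auto
    have "fps2_sum T $ p $ q = (\<Sum>(k,l)\<in>?S. T k l $ p $ q)"
      by (simp add: fps2_sum_def)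
    also have "\<dots> = (\<Sum>(k,l)\<in>{..p} \<times> {..q}. T k l $ p $ q)"
      by (rule sum.mono_neutral_right[OF fin]) (auto simp: Tt split: if_splits)
    also have "\<dots> = (\<Sum>(k,l)\<in>{..p} \<times> {..q}. Cm * (-1)^q * u k l)"
      by (rule sum.cong[OF refl]) (auto simp: Tt)
    also have "\<dots> = (\<Sum>k\<le>p. \<Sum>l\<le>q. Cm * (-1)^q * u k l)"
      by (simp add: sum.cartesian_product)
    finally show ?thesis .
  qed
  show "horn_H2 a b c d e $ p $ q = (?M + fps2_sum ?T) $ p $ q"
    unfolding TT fps_add_nth H M S
    unfolding lemC[of a q p] u_def[symmetric] sum_distrib_left[symmetric]
    by (simp add: algebra_simps)
qed
end
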